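(* Let $T_1,T_2,\dots,T_{2^n}$ be any enumeration of all subsets of $N=\{1,\dots,n\}$ such that $T_i\subseteq T_j$ implies $i\le j$. Then every $q\in P_n$ can be written as $q=q_1q_2\cdots q_{2^n}$, where for each $j$, $q_j\in P_n$ is a (possibly empty, hence equal to $1$) product of monic commutators each of which has support exactly $T_j$.
   Context: $P_n$ denotes the pure braid group on $n$ strands, generated by elements $p_{a,b}$ for $1\le a<b\le n$ subject to the relations: (A) $p_{a,b}p_{a,c}p_{b,c}=p_{a,c}p_{b,c}p_{a,b}=p_{b,c}p_{a,b}p_{a,c}$ for $1\le a<b<c\le n$; (B) $p_{a,b}p_{c,d}=p_{c,d}p_{a,b}$ and $p_{a,d}p_{b,c}=p_{b,c}p_{a,d}$ for $1\le a<b<c<d\le n$; (C) $p_{a,c}p_{b,c}^{-1}p_{b,d}p_{b,c}=p_{b,c}^{-1}p_{b,d}p_{b,c}p_{a,c}$ for $1\le a<b<c<d\le n$. For $S\subseteq N$, $P_S$ is the subgroup generated by the $p_{a,b}$ with $a,b\in S$. Commutator convention: $[x,y]=x^{-1}y^{-1}xy$. Monic commutators are defined recursively: each $p_{a,b}$ and $p_{a,b}^{-1}$ ($1\le a<b\le n$) is a monic commutator; if $x,y$ are monic commutators and $[x,y]\neq1$, then $[x,y]$ is a monic commutator. The support $\sigma(x)$ of $x\in P_n$ is the intersection of all $S\subseteq N$ such that $x\in P_S$. *)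

theory Defs
  imports Main
begin

text \<open>Generator p_{a,b} is the pair (a,b);
a letter is a generator with a sign (True = p_{a,b}, False = p_{a,b}^{-1}); group elements
are represented by words, with equality in P_n given by the congruence pbeq n.\<close>

type_synonym letter = "(nat \<times> nat) \<times> bool"
type_synonym word = "letter list"

definition valid_gen :: "nat \<Rightarrow> nat \<times> nat \<Rightarrow> bool" where
  "valid_gen n g \<longleftrightarrow> 1 \<le> fst g \<and> fst g < snd g \<and> snd g \<le> n"

definition valid_word :: "nat \<Rightarrow> word \<Rightarrow> bool" where
  "valid_word n w \<longleftrightarrow> (\<forall>l \<in> set w. valid_gen n (fst l))"

definition inv_word :: "word \<Rightarrow> word" where
  "inv_word w = rev (map (\<lambda>(g, s). (g, \<not> s)) w)"

definition pg :: "nat \<Rightarrow> nat \<Rightarrow> word" where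
  "pg a b = [((a, b), True)]"

definition pgi :: "nat \<Rightarrow> nat \<Rightarrow> word" where
  "pgi a b = [((a, b), False)]"

inductive pbeq :: "nat \<Rightarrow> word \<Rightarrow> word \<Rightarrow> bool" for n where
  refl: "pbeq n w w"
| sym: "pbeq n u v \<Longrightarrow> pbeq n v u"
| trans: "pbeq n u v \<Longrightarrow> pbeq n v w \<Longrightarrow> pbeq n u w"
| ctx: "pbeq n u v \<Longrightarrow> pbeq n (x @ u @ y) (x @ v @ y)"
| cancel: "valid_gen n g \<Longrightarrow> pbeq n [(g, s), (g, \<not> s)] []"
| relA1: "1 \<le> a \<Longrightarrow> a < b \<Longrightarrow> b < c \<Longrightarrow> c \<le> n \<Longrightarrow>
    pbeq n (pg a b @ pg a c @ pg b c) (pg a c @ pg b c @ pg a b)"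
| relA2: "1 \<le> a \<Longrightarrow> a < b \<Longrightarrow> b < c \<Longrightarrow> c \<le> n \<Longrightarrow>
    pbeq n (pg a c @ pg b c @ pg a b) (pg b c @ pg a b @ pg a c)"
| relB1: "1 \<le> a \<Longrightarrow> a < b \<Longrightarrow> b < c \<Longrightarrow> c < d \<Longrightarrow> d \<le> n \<Longrightarrow>
    pbeq n (pg a b @ pg c d) (pg c d @ pg a b)"
| relB2: "1 \<le> a \<Longrightarrow> a < b \<Longrightarrow> b < c \<Longrightarrow> c < d \<Longrightarrow> d \<le> n \<Longrightarrow>
    pbeq n (pg a d @ pg b c) (pg b c @ pg a d)"
| relC: "1 \<le> a \<Longrightarrow> a < b \<Longrightarrow> b < c \<Longrightarrow> c < d \<Longrightarrow> d \<le> n \<Longrightarrow>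
    pbeq n (pg a c @ pgi b c @ pg b d @ pg b c) (pgi b c @ pg b d @ pg b c @ pg a c)"

definition comm :: "word \<Rightarrow> word \<Rightarrow> word" where
  "comm x y = inv_word x @ inv_word y @ x @ y"

inductive_set monic :: "nat \<Rightarrow> word set" for n where
  gen_pos: "valid_gen n g \<Longrightarrow> [(g, True)] \<in> monic n"
| gen_neg: "valid_gen n g \<Longrightarrow> [(g, False)] \<in> monic n"
| comm: "x \<in> monic n \<Longrightarrow> y \<in> monic n \<Longrightarrow> \<not> pbeq n (comm x y) [] \<Longrightarrow> comm x y \<in> monic n"

definition in_PS :: "nat \<Rightarrow> nat set \<Rightarrow> word \<Rightarrow> bool" where
  "in_PS n S w \<longleftrightarrow> (\<exists>w'. pbeq n w w' \<and> (\<forall>l \<in> set w'. fst (fst l) \<in> S \<and> snd (fst l) \<in> S))"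

definition supp :: "nat \<Rightarrow> word \<Rightarrow> nat set" where
  "supp n w = \<Inter> {S. S \<subseteq> {1..n} \<and> in_PS n S w}"

end

theory Submission
  imports Defs
begin

lemma pbeq_app: "pbeq n a b \<Longrightarrow> pbeq n c d \<Longrightarrow> pbeq n (a @ c) (b @ d)"
proof -
  assume 1: "pbeq n a b" and 2: "pbeq n c d"
  have "pbeq n ([] @ a @ c) ([] @ b @ c)" by (rule pbeq.ctx[OF 1])
  moreover have "pbeq n (b @ c @ []) (b @ d @ [])" by (rule pbeq.ctx[OF 2])
  ultimately show ?thesis by (auto intro: pbeq.trans)
qed

lemma valid_inv[simp]: "valid_word n (inv_word w) = valid_word n w"
  by (auto simp: valid_word_def inv_word_def split: prod.splits)

lemma valid_app[simp]: "valid_word n (a @ b) = (valid_word n a \<and> valid_word n b)"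
  by (auto simp: valid_word_def)

lemma valid_Cons[simp]: "valid_word n (l # b) = (valid_gen n (fst l) \<and> valid_word n b)"
  by (auto simp: valid_word_def)

lemma valid_Nil[simp]: "valid_word n []"
  by (auto simp: valid_word_def)

lemma inv_cancel: "valid_word n w \<Longrightarrow> pbeq n (w @ inv_word w) [] \<and> pbeq n (inv_word w @ w) []"
proof (induction w)
  case Nil
  then show ?case by (simp add: inv_word_def pbeq.refl)
next
  case (Cons l w)
  obtain g s where l: "l = (g, s)" by (cases l)
  have g: "valid_gen n g" using Cons.prems l by simp
  have iw: "inv_word (l # w) = inv_word w @ [(g, \<not> s)]" using l by (simp add: inv_word_def)
  from Cons have ih1: "pbeq n (w @ inv_word w) []" and ih2: "pbeq n (inv_word w @ w) []" by auto
  have "pbeq n ([(g,s)] @ (w @ inv_word w) @ [(g,\<not>s)]) ([(g,s)] @ [] @ [(g,\<not>s)])"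
    by (rule pbeq.ctx[OF ih1])
  moreover have "pbeq n [(g,s),(g,\<not>s)] []" by (rule pbeq.cancel[OF g])
  ultimately have A: "pbeq n ((l # w) @ inv_word (l # w)) []" using iw l by (auto intro: pbeq.trans)
  have "pbeq n (inv_word w @ [(g,\<not>s),(g,s)] @ w) (inv_word w @ [] @ w)"
    by (rule pbeq.ctx) (use pbeq.cancel[OF g, of "\<not> s"] in simp)
  then have "pbeq n (inv_word (l # w) @ (l # w)) (inv_word w @ w)" using iw l by simp
  with ih2 have B: "pbeq n (inv_word (l # w) @ (l # w)) []" by (auto intro: pbeq.trans)
  from A B show ?case by simp
qed

definition del :: "nat \<Rightarrow> word \<Rightarrow> word" where
  "del k w = filter (\<lambda>l. fst (fst l) \<noteq> k \<and> snd (fst l) \<noteq> k) w"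

lemma del_app[simp]: "del k (a @ b) = del k a @ del k b" by (simp add: del_def)

lemma del_inv: "del k (inv_word w) = inv_word (del k w)"
  by (induction w) (auto simp: del_def inv_word_def)

lemma del_comm: "del k (comm x y) = comm (del k x) (del k y)"
  by (simp add: comm_def del_inv)

lemma valid_del: "valid_word n w \<Longrightarrow> valid_word n (del k w)"
  by (auto simp: valid_word_def del_def)

lemma pbeq_del: "pbeq n u v \<Longrightarrow> pbeq n (del k u) (del k v)"
proof (induction rule: pbeq.induct)
  case (refl w) then show ?case by (rule pbeq.refl)
next
  case (sym u v) then show ?case by (blast intro: pbeq.sym)
next
  case (trans u v w) then show ?case by (blast intro: pbeq.trans)
next
  case (ctx u v x y) then show ?case by (simp add: pbeq.ctx)
next
  case (cancel g s) then show ?case by (auto simp: del_def pbeq.refl intro: pbeq.cancel)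
next
  case (relA1 a b c) then show ?case
    by (auto simp: del_def pg_def pbeq.refl intro: pbeq.relA1[simplified pg_def, simplified])
next
  case (relA2 a b c) then show ?case
    by (auto simp: del_def pg_def pbeq.refl intro: pbeq.relA2[simplified pg_def, simplified])
next
  case (relB1 a b c d) then show ?case
    by (auto simp: del_def pg_def pbeq.refl intro: pbeq.relB1[simplified pg_def, simplified])
next
  case (relB2 a b c d) then show ?case
    by (auto simp: del_def pg_def pbeq.refl intro: pbeq.relB2[simplified pg_def, simplified])
next
  case (relC a b c d)
  have g: "valid_gen n (b, c)" using relC by (simp add: valid_gen_def)
  have cc: "pbeq n [((b,c),False),((b,c),True)] []" using pbeq.cancel[OF g, of False] by simp
  have e1: "pbeq n ([((a,c),True)] @ [((b,c),False),((b,c),True)] @ []) ([((a,c),True)] @ [] @ [])"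
    by (rule pbeq.ctx[OF cc])
  have e2: "pbeq n ([] @ [((b,c),False),((b,c),True)] @ [((a,c),True)]) ([] @ [] @ [((a,c),True)])"
    by (rule pbeq.ctx[OF cc])
  have dd: "pbeq n [((a,c),True),((b,c),False),((b,c),True)] [((b,c),False),((b,c),True),((a,c),True)]"
    using e1 e2 by (auto intro: pbeq.trans pbeq.sym)
  show ?case
  proof (cases "k = d")
    case True
    then show ?thesis using relC dd by (simp add: del_def pg_def pgi_def)
  next
    case False
    then show ?thesis using relC
      by (auto simp: del_def pg_def pgi_def pbeq.refl intro: pbeq.relC[simplified pg_def pgi_def, simplified])
  qed
qed

inductive_set fc :: "nat \<Rightarrow> word set" for n where
  leaf: "valid_gen n g \<Longrightarrow> [(g, s)] \<in> fc n"
| cm: "x \<in> fc n \<Longrightarrow> y \<in> fc n \<Longrightarrow> comm x y \<in> fc n"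

definition ends :: "word \<Rightarrow> nat set" where
  "ends w = (\<Union>l\<in>set w. {fst (fst l), snd (fst l)})"

lemma ends_app[simp]: "ends (a @ b) = ends a \<union> ends b" by (auto simp: ends_def)

lemma ends_inv[simp]: "ends (inv_word w) = ends w"
  by (auto simp: ends_def inv_word_def split: prod.splits)

lemma ends_comm: "ends (comm x y) = ends x \<union> ends y" by (auto simp: comm_def)

lemma ends_valid: "valid_word n w \<Longrightarrow> ends w \<subseteq> {1..n}"
  by (auto simp: ends_def valid_word_def valid_gen_def)

lemma fc_valid: "c \<in> fc n \<Longrightarrow> valid_word n c"
  by (induction rule: fc.induct) (auto simp: comm_def)

lemma comm_triv1:
  assumes "valid_word n x" "valid_word n y" "pbeq n x []"
  shows "pbeq n (comm x y) []"
proof -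
  have "pbeq n (inv_word x @ inv_word y @ x @ y) (inv_word x @ inv_word y @ [] @ y)"
    using pbeq.ctx[OF assms(3), of "inv_word x @ inv_word y" y] by simp
  moreover have "pbeq n (inv_word x @ (inv_word y @ y) @ []) (inv_word x @ [] @ [])"
    by (rule pbeq.ctx) (use inv_cancel[OF assms(2)] in simp)
  moreover have "pbeq n (inv_word x) (x @ inv_word x)"
    using pbeq.ctx[OF pbeq.sym[OF assms(3)], of "[]" "inv_word x"] by simp
  moreover have "pbeq n (x @ inv_word x) []" using inv_cancel[OF assms(1)] by simp
  ultimately show ?thesis unfolding comm_def by (auto intro: pbeq.trans)
qed

lemma comm_triv2:
  assumes "valid_word n x" "valid_word n y" "pbeq n y []"
  shows "pbeq n (comm x y) []"
proof -
  have "pbeq n (inv_word x @ inv_word y @ x @ y) (inv_word x @ inv_word y @ x @ [])"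
    using pbeq.ctx[OF assms(3), of "inv_word x @ inv_word y @ x" "[]"] by simp
  moreover have "pbeq n ((inv_word x) @ [] @ inv_word y @ x) (inv_word x @ y @ inv_word y @ x)"
    by (rule pbeq.ctx) (use assms(3) in \<open>blast intro: pbeq.sym\<close>)
  moreover have "pbeq n ((inv_word x) @ (y @ inv_word y) @ x) (inv_word x @ [] @ x)"
    by (rule pbeq.ctx) (use inv_cancel[OF assms(2)] in simp)
  moreover have "pbeq n (inv_word x @ x) []" using inv_cancel[OF assms(1)] by simp
  ultimately show ?thesis unfolding comm_def by (auto intro: pbeq.trans pbeq.sym)
qed

lemma fc_del: "c \<in> fc n \<Longrightarrow> k \<in> ends c \<Longrightarrow> pbeq n (del k c) []"
proof (induction rule: fc.induct)
  case (leaf g s) then show ?case by (auto simp: ends_def del_def pbeq.refl)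
next
  case (cm x y)
  have vx: "valid_word n (del k x)" and vy: "valid_word n (del k y)"
    using cm fc_valid valid_del by blast+
  from cm.prems have "k \<in> ends x \<or> k \<in> ends y" by (simp add: ends_comm)
  then show ?case
    using cm.IH comm_triv1[OF vx vy] comm_triv2[OF vx vy] by (auto simp: del_comm)
qed

lemma fc_monic: "c \<in> fc n \<Longrightarrow> \<not> pbeq n c [] \<Longrightarrow> c \<in> monic n"
proof (induction rule: fc.induct)
  case (leaf g s) then show ?case by (cases s) (auto intro: monic.intros)
next
  case (cm x y)
  have vx: "valid_word n x" and vy: "valid_word n y" using cm fc_valid by blast+
  have "\<not> pbeq n x []" using cm.prems comm_triv1[OF vx vy] by blast
  moreover have "\<not> pbeq n y []" using cm.prems comm_triv2[OF vx vy] by blast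
  ultimately show ?case using cm by (auto intro: monic.comm)
qed

lemma fc_supp:
  assumes c: "c \<in> fc n" and nt: "\<not> pbeq n c []"
  shows "supp n c = ends c"
proof -
  have v: "valid_word n c" using c fc_valid by blast
  have e: "ends c \<subseteq> {1..n}" using ends_valid[OF v] .
  have inE: "in_PS n (ends c) c"
    unfolding in_PS_def by (rule exI[of _ c]) (auto simp: pbeq.refl ends_def)
  have low: "ends c \<subseteq> S" if "in_PS n S c" for S
  proof
    fix k assume k: "k \<in> ends c"
    show "k \<in> S"
    proof (rule ccontr)
      assume kS: "k \<notin> S"
      from that obtain w' where w: "pbeq n c w'" and ws: "\<forall>l\<in>set w'. fst (fst l) \<in> S \<and> snd (fst l) \<in> S"
        unfolding in_PS_def by blast
      have "del k w' = w'" using ws kS by (auto simp: del_def filter_id_conv)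
      then have "pbeq n (del k c) c" using pbeq_del[OF w, of k] w by (auto intro: pbeq.trans pbeq.sym)
      then have "pbeq n c []" using fc_del[OF c k] by (blast intro: pbeq.trans pbeq.sym)
      with nt show False by blast
    qed
  qed
  show ?thesis unfolding supp_def using e inE low by blast
qed

lemma trans_eq: "pbeq n a b \<Longrightarrow> pbeq n b' c \<Longrightarrow> a' = a \<Longrightarrow> b = b' \<Longrightarrow> c' = c \<Longrightarrow> pbeq n a' c'"
  using pbeq.trans by blast

lemma swap:
  assumes vx: "valid_word n x" and vy: "valid_word n y"
  shows "pbeq n (y @ x) (x @ y @ comm y x)"
proof -
  have "pbeq n (x @ (y @ inv_word y) @ (inv_word x @ y @ x)) (x @ [] @ (inv_word x @ y @ x))"
    by (rule pbeq.ctx) (use inv_cancel[OF vy] in simp)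
  moreover have "pbeq n ([] @ (x @ inv_word x) @ (y @ x)) ([] @ [] @ (y @ x))"
    by (rule pbeq.ctx) (use inv_cancel[OF vx] in simp)
  ultimately have "pbeq n (x @ y @ comm y x) (y @ x)" unfolding comm_def
    by (rule trans_eq) simp_all
  then show ?thesis by (rule pbeq.sym)
qed

definition gt :: "nat \<Rightarrow> (nat \<Rightarrow> nat set) \<Rightarrow> nat \<Rightarrow> word \<Rightarrow> bool" where
  "gt n T j c \<longleftrightarrow> c \<in> fc n \<and> (\<exists>i. j < i \<and> i \<le> 2^n \<and> ends c = T i)"

lemma comm_gt:
  assumes surj: "T ` {1..2^n} = Pow {1..n}"
    and order: "\<forall>i\<in>{1..2^n}. \<forall>j\<in>{1..2^n}. T i \<subseteq> T j \<longrightarrow> i \<le> j"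
    and y: "gt n T j y" and x: "x \<in> fc n"
  shows "gt n T j (comm y x)"
proof -
  have yf: "y \<in> fc n" using y unfolding gt_def by blast
  obtain i where i: "j < i" "i \<le> 2^n" "ends y = T i" using y unfolding gt_def by blast
  have cf: "comm y x \<in> fc n" by (rule fc.cm[OF yf x])
  have "ends (comm y x) \<subseteq> {1..n}" using fc_valid[OF cf] by (rule ends_valid)
  then have "ends (comm y x) \<in> T ` {1..2^n}" using surj by simp
  then obtain k where k: "k \<in> {1..2^n}" "T k = ends (comm y x)" by (metis imageE)
  have "T i \<subseteq> T k" using i(3) k(2) by (simp add: ends_comm)
  moreover have "i \<in> {1..2^n}" using i by simp
  ultimately have "i \<le> k" using order k(1) by blast
  then have "j < k \<and> k \<le> 2^n \<and> ends (comm y x) = T k" using i k by simp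
  then show ?thesis using cf unfolding gt_def by blast
qed

lemma move1:
  assumes surj: "T ` {1..2^n} = Pow {1..n}"
    and order: "\<forall>i\<in>{1..2^n}. \<forall>j\<in>{1..2^n}. T i \<subseteq> T j \<longrightarrow> i \<le> j"
    and x: "x \<in> fc n"
  shows "(\<forall>c\<in>set ys. gt n T j c) \<Longrightarrow> \<exists>ys'. (\<forall>c\<in>set ys'. gt n T j c) \<and>
           pbeq n (concat ys @ x) (x @ concat ys')"
proof (induction ys)
  case Nil
  have "pbeq n x (x @ concat [])" using pbeq.refl[of n x] by simp
  then show ?case by (intro exI[of _ "[]"]) simp
next
  case (Cons y ys)
  then obtain ys'' where h: "\<forall>c\<in>set ys''. gt n T j c" "pbeq n (concat ys @ x) (x @ concat ys'')" by auto
  have gy: "gt n T j y" using Cons by simp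
  have vx: "valid_word n x" using fc_valid x by blast
  have vy: "valid_word n y" using gy fc_valid by (auto simp: gt_def)
  have "pbeq n (y @ concat ys @ x) (y @ x @ concat ys'')" using pbeq.ctx[OF h(2), of y "[]"] by simp
  moreover have "pbeq n ((y @ x) @ concat ys'') ((x @ y @ comm y x) @ concat ys'')"
    using pbeq.ctx[OF swap[OF vx vy], of "[]" "concat ys''"] by simp
  ultimately have "pbeq n (concat (y # ys) @ x) (x @ concat (y # comm y x # ys''))"
    by (rule trans_eq) simp_all
  moreover have "\<forall>c\<in>set (y # comm y x # ys''). gt n T j c"
    using h gy comm_gt[OF surj order gy x] by auto
  ultimately show ?case by blast
qed

lemma moveA:
  assumes surj: "T ` {1..2^n} = Pow {1..n}"
    and order: "\<forall>i\<in>{1..2^n}. \<forall>j\<in>{1..2^n}. T i \<subseteq> T j \<longrightarrow> i \<le> j"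
  shows "(\<forall>c\<in>set A. c \<in> fc n) \<Longrightarrow> (\<forall>c\<in>set ys. gt n T j c) \<Longrightarrow> \<exists>ys'. (\<forall>c\<in>set ys'. gt n T j c) \<and>
           pbeq n (concat ys @ concat A) (concat A @ concat ys')"
proof (induction A arbitrary: ys)
  case Nil then show ?case by (auto intro: pbeq.refl)
next
  case (Cons a A)
  obtain ys1 where 1: "\<forall>c\<in>set ys1. gt n T j c" "pbeq n (concat ys @ a) (a @ concat ys1)"
    using move1[OF surj order, of a ys j] Cons.prems by auto
  obtain ys2 where 2: "\<forall>c\<in>set ys2. gt n T j c" "pbeq n (concat ys1 @ concat A) (concat A @ concat ys2)"
    using Cons.IH[OF _ 1(1)] Cons.prems by auto
  have "pbeq n ((concat ys @ a) @ concat A) ((a @ concat ys1) @ concat A)"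
    using pbeq.ctx[OF 1(2), of "[]" "concat A"] by simp
  moreover have "pbeq n (a @ (concat ys1 @ concat A) @ []) (a @ (concat A @ concat ys2) @ [])"
    by (rule pbeq.ctx[OF 2(2)])
  ultimately have "pbeq n (concat ys @ concat (a # A)) (concat (a # A) @ concat ys2)"
    by (rule trans_eq) simp_all
  with 2 show ?case by blast
qed

lemma split:
  assumes surj: "T ` {1..2^n} = Pow {1..n}"
    and order: "\<forall>i\<in>{1..2^n}. \<forall>j\<in>{1..2^n}. T i \<subseteq> T j \<longrightarrow> i \<le> j"
  shows "(\<forall>c\<in>set cs. c \<in> fc n \<and> (\<exists>i. j \<le> i \<and> i \<le> 2^n \<and> ends c = T i)) \<Longrightarrow>
    \<exists>A B. (\<forall>c\<in>set A. c \<in> fc n \<and> ends c = T j) \<and> (\<forall>c\<in>set B. gt n T j c) \<and>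
       pbeq n (concat cs) (concat A @ concat B)"
proof (induction cs)
  case Nil
  have "pbeq n [] (concat [] @ concat [])" using pbeq.refl[of n "[]"] by simp
  then show ?case by (intro exI[of _ "[]"]) simp
next
  case (Cons c cs)
  then obtain A B where h: "\<forall>c\<in>set A. c \<in> fc n \<and> ends c = T j" "\<forall>c\<in>set B. gt n T j c"
     "pbeq n (concat cs) (concat A @ concat B)" by auto
  have c: "c \<in> fc n" and ci: "\<exists>i. j \<le> i \<and> i \<le> 2^n \<and> ends c = T i" using Cons.prems by auto
  have e: "pbeq n (concat (c # cs)) (c @ concat A @ concat B)"
    using pbeq.ctx[OF h(3), of c "[]"] by simp
  show ?case
  proof (cases "ends c = T j")
    case True
    then show ?thesis using e h c by (intro exI[of _ "c # A"] exI[of _ B]) auto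
  next
    case False
    then have g: "gt n T j c" using c ci unfolding gt_def by (metis le_neq_implies_less)
    obtain ys where ys: "\<forall>c\<in>set ys. gt n T j c" "pbeq n (concat [c] @ concat A) (concat A @ concat ys)"
      using moveA[OF surj order, of A "[c]" j] h g by auto
    have "pbeq n ((c @ concat A) @ concat B) ((concat A @ concat ys) @ concat B)"
      using pbeq.ctx[OF ys(2), of "[]" "concat B"] by simp
    with e have "pbeq n (concat (c # cs)) (concat A @ concat (ys @ B))" by (rule trans_eq) simp_all
    then show ?thesis using ys h by (intro exI[of _ A] exI[of _ "ys @ B"]) auto
  qed
qed

lemma collect:
  assumes surj: "T ` {1..2^n} = Pow {1..n}"
    and order: "\<forall>i\<in>{1..2^n}. \<forall>j\<in>{1..2^n}. T i \<subseteq> T j \<longrightarrow> i \<le> j"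
    and jle: "j \<le> 2^n + 1"
  shows "\<forall>cs. (\<forall>c\<in>set cs. c \<in> fc n \<and> (\<exists>i. j \<le> i \<and> i \<le> 2^n \<and> ends c = T i)) \<longrightarrow>
     (\<exists>Q. pbeq n (concat cs) (concat (map Q [j..<2^n+1])) \<and>
          (\<forall>i\<in>{j..2^n}. \<exists>A. Q i = concat A \<and> (\<forall>c\<in>set A. c \<in> fc n \<and> ends c = T i)))"
  using jle
proof (induction j rule: inc_induct)
  case base
  show ?case
  proof (intro allI impI)
    fix cs :: "word list"
    assume h: "\<forall>c\<in>set cs. c \<in> fc n \<and> (\<exists>i. 2^n + 1 \<le> i \<and> i \<le> 2^n \<and> ends c = T i)"
    then have "cs = []" by (cases cs) auto
    then show "\<exists>Q. pbeq n (concat cs) (concat (map Q [2^n+1..<2^n+1])) \<and>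
          (\<forall>i\<in>{2^n+1..2^n}. \<exists>A. Q i = concat A \<and> (\<forall>c\<in>set A. c \<in> fc n \<and> ends c = T i))"
      by (auto intro: pbeq.refl)
  qed
next
  case (step j)
  show ?case
  proof (intro allI impI)
    fix cs :: "word list"
    assume h: "\<forall>c\<in>set cs. c \<in> fc n \<and> (\<exists>i. j \<le> i \<and> i \<le> 2^n \<and> ends c = T i)"
    obtain A B where AB: "\<forall>c\<in>set A. c \<in> fc n \<and> ends c = T j" "\<forall>c\<in>set B. gt n T j c"
       "pbeq n (concat cs) (concat A @ concat B)"
      using split[OF surj order h] by blast
    have "\<forall>c\<in>set B. c \<in> fc n \<and> (\<exists>i. Suc j \<le> i \<and> i \<le> 2^n \<and> ends c = T i)"
      using AB(2) unfolding gt_def by (auto simp: Suc_le_eq)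
    then obtain Q where Q: "pbeq n (concat B) (concat (map Q [Suc j..<2^n+1]))"
      "\<forall>i\<in>{Suc j..2^n}. \<exists>A. Q i = concat A \<and> (\<forall>c\<in>set A. c \<in> fc n \<and> ends c = T i)"
      using step.IH by blast
    define Q' where "Q' = Q(j := concat A)"
    have m: "map Q' [Suc j..<2^n+1] = map Q [Suc j..<2^n+1]"
      unfolding Q'_def by (rule map_cong) auto
    have up: "[j..<2^n+1] = j # [Suc j..<2^n+1]" using step.hyps by (simp add: upt_conv_Cons)
    have "pbeq n (concat A @ concat B @ []) (concat A @ concat (map Q [Suc j..<2^n+1]) @ [])"
      by (rule pbeq.ctx[OF Q(1)])
    have eq: "concat (map Q' [j..<2^n+1]) = concat A @ concat (map Q [Suc j..<2^n+1])"
      unfolding up list.map concat.simps m by (simp only: Q'_def fun_upd_same)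
    have "pbeq n (concat cs) (concat (map Q' [j..<2^n+1]))"
      by (rule trans_eq[OF AB(3) \<open>pbeq n (concat A @ concat B @ []) _\<close>]) (simp_all only: eq append_Nil2)
    moreover have "\<forall>i\<in>{j..2^n}. \<exists>A. Q' i = concat A \<and> (\<forall>c\<in>set A. c \<in> fc n \<and> ends c = T i)"
    proof
      fix i assume i: "i \<in> {j..2^n}"
      show "\<exists>A. Q' i = concat A \<and> (\<forall>c\<in>set A. c \<in> fc n \<and> ends c = T i)"
      proof (cases "i = j")
        case True then show ?thesis using AB(1) by (auto simp: Q'_def)
      next
        case False then have "i \<in> {Suc j..2^n}" using i by auto
        then show ?thesis using Q(2) False by (auto simp: Q'_def)
      qed
    qed
    ultimately show "\<exists>Q. pbeq n (concat cs) (concat (map Q [j..<2^n+1])) \<and>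
          (\<forall>i\<in>{j..2^n}. \<exists>A. Q i = concat A \<and> (\<forall>c\<in>set A. c \<in> fc n \<and> ends c = T i))"
      by blast
  qed
qed

lemma filter_nontriv: "pbeq n (concat A) (concat (filter (\<lambda>c. \<not> pbeq n c []) A))"
proof (induction A)
  case Nil then show ?case by (simp add: pbeq.refl)
next
  case (Cons a A)
  show ?case
  proof (cases "pbeq n a []")
    case True
    have "pbeq n ([] @ a @ concat A) ([] @ [] @ concat A)" by (rule pbeq.ctx[OF True])
    then have "pbeq n (a @ concat A) (concat (filter (\<lambda>c. \<not> pbeq n c []) A))"
      by (rule trans_eq[OF _ Cons.IH]) simp_all
    then show ?thesis using True by simp
  next
    case False
    have "pbeq n (a @ concat A @ []) (a @ concat (filter (\<lambda>c. \<not> pbeq n c []) A) @ [])"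
      by (rule pbeq.ctx[OF Cons.IH])
    then show ?thesis using False by simp
  qed
qed

theorem mainTheorem10:
  fixes n :: nat and T :: "nat \<Rightarrow> nat set"
  assumes enum: "bij_betw T {1..2^n} (Pow {1..n})"
    and order: "\<forall>i\<in>{1..2^n}. \<forall>j\<in>{1..2^n}. T i \<subseteq> T j \<longrightarrow> i \<le> j"
  shows "\<forall>q. valid_word n q \<longrightarrow>
    (\<exists>Q :: nat \<Rightarrow> word.
        pbeq n q (concat (map Q [1..<2^n + 1])) \<and>
        (\<forall>j\<in>{1..2^n}. valid_word n (Q j) \<and>
           (\<exists>cs. set cs \<subseteq> monic n \<and> (\<forall>c\<in>set cs. supp n c = T j)
                 \<and> pbeq n (Q j) (concat cs))))"
proof (intro allI impI)
  fix q assume vq: "valid_word n q"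
  have surj: "T ` {1..2^n} = Pow {1..n}" using enum by (rule bij_betw_imp_surj_on)
  define cs where "cs = map (\<lambda>l. [l]) q"
  have cq: "concat cs = q" unfolding cs_def by (induction q) auto
  have hcs: "\<forall>c\<in>set cs. c \<in> fc n \<and> (\<exists>i. 1 \<le> i \<and> i \<le> 2^n \<and> ends c = T i)"
  proof
    fix c assume "c \<in> set cs"
    then obtain l where l: "l \<in> set q" "c = [l]" unfolding cs_def by auto
    obtain g s where gs: "l = (g, s)" by (cases l)
    have vg: "valid_gen n g" using vq l gs by (auto simp: valid_word_def)
    have cf: "c \<in> fc n" using fc.leaf[OF vg, of s] l gs by simp
    have "ends c \<subseteq> {1..n}" using fc_valid[OF cf] by (rule ends_valid)
    then have "ends c \<in> T ` {1..2^n}" using surj by simp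
    then obtain i where "i \<in> {1..2^n}" "ends c = T i" by (metis imageE)
    then show "c \<in> fc n \<and> (\<exists>i. 1 \<le> i \<and> i \<le> 2^n \<and> ends c = T i)" using cf by auto
  qed
  obtain Q where Q: "pbeq n (concat cs) (concat (map Q [1..<2^n+1]))"
      "\<forall>i\<in>{1..2^n}. \<exists>A. Q i = concat A \<and> (\<forall>c\<in>set A. c \<in> fc n \<and> ends c = T i)"
    using collect[OF surj order, of 1] hcs by auto
  have "\<forall>j\<in>{1..2^n}. valid_word n (Q j) \<and>
           (\<exists>cs. set cs \<subseteq> monic n \<and> (\<forall>c\<in>set cs. supp n c = T j)
                 \<and> pbeq n (Q j) (concat cs))"
  proof
    fix j :: nat assume j: "j \<in> {1..2^n}"
    then obtain A where A: "Q j = concat A" "\<forall>c\<in>set A. c \<in> fc n \<and> ends c = T j" using Q(2) by blast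
    define cs' where "cs' = filter (\<lambda>c. \<not> pbeq n c []) A"
    have "\<forall>c\<in>set A. valid_word n c" using A fc_valid by blast
    then have "valid_word n (Q j)" using A(1) by (auto simp: valid_word_def)
    moreover have "set cs' \<subseteq> monic n" using A fc_monic by (auto simp: cs'_def)
    moreover have "\<forall>c\<in>set cs'. supp n c = T j" using A fc_supp by (auto simp: cs'_def)
    moreover have "pbeq n (Q j) (concat cs')" using A filter_nontriv by (simp add: cs'_def)
    ultimately show "valid_word n (Q j) \<and>
           (\<exists>cs. set cs \<subseteq> monic n \<and> (\<forall>c\<in>set cs. supp n c = T j)
                 \<and> pbeq n (Q j) (concat cs))" by blast
  qed
  then show "\<exists>Q :: nat \<Rightarrow> word.
        pbeq n q (concat (map Q [1..<2^n + 1])) \<and>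
        (\<forall>j\<in>{1..2^n}. valid_word n (Q j) \<and>
           (\<exists>cs. set cs \<subseteq> monic n \<and> (\<forall>c\<in>set cs. supp n c = T j)
                 \<and> pbeq n (Q j) (concat cs)))"
    using Q(1) cq by auto
qed

end
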